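(* Let $f$ be a critically coalescing quadratic rational map with critical values $v_1,v_2$, and let $k\ge2$. Then for $x\in\hat{\mathbb{C}}$, $x\in\mathcal{V}_f\cup\{f(v_1)\}$ if and only if $f^{-k}(x)\subseteq\mathcal{C}_{f^k}$.
   Context: A quadratic rational map $f$ with critical values $v_1\neq v_2$ is critically coalescing if $f(v_1)=f(v_2)$. $\mathcal{C}_h$, $\mathcal{V}_h$ denote the sets of critical points and critical values of $h$; $f^{-k}(x)$ is the full preimage of $x$ under the $k$-th iterate. *)

theory Defs
  imports "HOL-Analysis.Analysis" "HOL-Computational_Algebra.Polynomial"
begin

text \<open>The Riemann sphere is modelled as complex option: Some z is z, None is infinity.\<close>

type_synonym sphere = "complex option"

definition rat_map :: "complex poly \<Rightarrow> complex poly \<Rightarrow> sphere \<Rightarrow> sphere" where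
  "rat_map p q y = (case y of
      Some z \<Rightarrow> (if poly q z = 0 then None else Some (poly p z / poly q z))
    | None \<Rightarrow> (if degree p > degree q then None
               else Some (coeff p (degree q) / coeff q (degree q))))"

definition quadratic_rational_map :: "(sphere \<Rightarrow> sphere) \<Rightarrow> bool" where
  "quadratic_rational_map f \<longleftrightarrow>
     (\<exists>p q. q \<noteq> 0 \<and> coprime p q \<and> max (degree p) (degree q) = 2 \<and> f = rat_map p q)"

definition chart :: "sphere \<Rightarrow> sphere \<Rightarrow> complex" where
  "chart a y = (case a of
      None \<Rightarrow> (case y of None \<Rightarrow> 0 | Some w \<Rightarrow> 1 / w)
    | Some _ \<Rightarrow> (case y of None \<Rightarrow> 0 | Some w \<Rightarrow> w))"

definition chart_inv :: "sphere \<Rightarrow> complex \<Rightarrow> sphere" where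
  "chart_inv a w = (case a of
      None \<Rightarrow> (if w = 0 then None else Some (1 / w))
    | Some _ \<Rightarrow> Some w)"

definition crit_points :: "(sphere \<Rightarrow> sphere) \<Rightarrow> sphere set" where
  "crit_points g = {z. deriv (\<lambda>w. chart (g z) (g (chart_inv z w))) (chart z z) = 0}"

definition crit_values :: "(sphere \<Rightarrow> sphere) \<Rightarrow> sphere set" where
  "crit_values g = g ` crit_points g"

end

theory Submission
  imports Defs
begin


definition loc :: "(sphere \<Rightarrow> sphere) \<Rightarrow> sphere \<Rightarrow> complex \<Rightarrow> complex" where
  "loc g z w = chart (g z) (g (chart_inv z w))"

definition goodset :: "sphere \<Rightarrow> sphere set" where
  "goodset a = {y. chart_inv a (chart a y) = y}"

definition RegAt :: "(sphere \<Rightarrow> sphere) \<Rightarrow> sphere \<Rightarrow> complex \<Rightarrow> bool" where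
  "RegAt g z D \<longleftrightarrow> (loc g z has_field_derivative D) (at (chart z z)) \<and>
     (\<forall>\<^sub>F w in nhds (chart z z). g (chart_inv z w) \<in> goodset (g z))"

lemma chart_inv_chart_self[simp]: "chart_inv z (chart z z) = z"
  by (cases z) (auto simp: chart_def chart_inv_def)

lemma loc_self: "loc g z (chart z z) = chart (g z) (g z)"
  by (simp add: loc_def)

lemma crit_iff: "RegAt g z D \<Longrightarrow> z \<in> crit_points g \<longleftrightarrow> D = 0"
proof -
  assume "RegAt g z D"
  then have "deriv (loc g z) (chart z z) = D" unfolding RegAt_def
    by (intro DERIV_imp_deriv) auto
  moreover have "loc g z = (\<lambda>w. chart (g z) (g (chart_inv z w)))" by (rule ext) (simp add: loc_def)
  ultimately show ?thesis unfolding crit_points_def by auto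
qed

lemma RegAt_id: "RegAt id z 1"
proof -
  have "loc id z = (\<lambda>w. w)"
    by (rule ext) (cases z, auto simp: loc_def chart_def chart_inv_def)
  moreover have "\<forall>w. chart_inv z w \<in> goodset z"
    by (cases z) (auto simp: goodset_def chart_def chart_inv_def)
  ultimately show ?thesis unfolding RegAt_def by auto
qed

lemma RegAt_comp:
  assumes F: "RegAt F z D1" and f: "RegAt f (F z) D2"
  shows "RegAt (f \<circ> F) z (D2 * D1)"
proof -
  define w0 where "w0 = chart z z"
  define u0 where "u0 = chart (F z) (F z)"
  have dF: "(loc F z has_field_derivative D1) (at w0)" 
    and gF: "\<forall>\<^sub>F w in nhds w0. F (chart_inv z w) \<in> goodset (F z)"
    using F unfolding RegAt_def w0_def by auto
  have df: "(loc f (F z) has_field_derivative D2) (at u0)" 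
    and gf: "\<forall>\<^sub>F u in nhds u0. f (chart_inv (F z) u) \<in> goodset (f (F z))"
    using f unfolding RegAt_def u0_def by auto
  have l0: "loc F z w0 = u0" by (simp add: w0_def u0_def loc_self)
  have "isCont (loc F z) w0" using dF by (rule DERIV_isCont)
  then have "(loc F z \<longlongrightarrow> u0) (nhds w0)"
    using l0 by (metis isCont_def tendsto_at_iff_tendsto_nhds)
  then have ev2: "\<forall>\<^sub>F w in nhds w0. f (chart_inv (F z) (loc F z w)) \<in> goodset (f (F z))"
    using eventually_compose_filterlim[OF gf] by (simp add: filterlim_def)
  have ev: "\<forall>\<^sub>F w in nhds w0. loc (f \<circ> F) z w = (loc f (F z) \<circ> loc F z) w
      \<and> (f \<circ> F) (chart_inv z w) \<in> goodset ((f \<circ> F) z)"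
    using gF ev2
  proof eventually_elim
    case (elim w)
    then have e: "chart_inv (F z) (chart (F z) (F (chart_inv z w))) = F (chart_inv z w)"
      by (simp add: goodset_def loc_def)
    show ?case using elim(2) by (simp add: e loc_def)
  qed
  have "(loc f (F z) \<circ> loc F z has_field_derivative D2 * D1) (at w0)"
    using DERIV_chain[OF _ dF] df l0 by simp
  then have "(loc (f \<circ> F) z has_field_derivative D2 * D1) (at w0)"
  proof -
    have ev': "\<forall>\<^sub>F w in nhds w0. loc (f \<circ> F) z w = (loc f (F z) \<circ> loc F z) w"
      using ev by (rule eventually_mono) auto
    have "DERIV (loc (f \<circ> F) z) w0 :> D2*D1 \<longleftrightarrow> DERIV (loc f (F z) \<circ> loc F z) w0 :> D2*D1"
      by (rule DERIV_cong_ev[OF refl ev' refl])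
    then show ?thesis using \<open>(loc f (F z) \<circ> loc F z has_field_derivative D2 * D1) (at w0)\<close> by simp
  qed
  then show ?thesis unfolding RegAt_def w0_def[symmetric]
    using ev by (auto elim: eventually_mono)
qed



lemma iter_reg:
  assumes R: "\<And>z. \<exists>D. RegAt f z D"
  shows "\<exists>D. RegAt (f ^^ n) z D \<and> (D = 0 \<longleftrightarrow> (\<exists>j<n. (f ^^ j) z \<in> crit_points f))"
proof (induction n arbitrary: z)
  case 0
  show ?case using RegAt_id[of z] by (auto simp: id_def)
next
  case (Suc n)
  obtain D1 where D1: "RegAt (f ^^ n) z D1" "D1 = 0 \<longleftrightarrow> (\<exists>j<n. (f ^^ j) z \<in> crit_points f)"
    using Suc by blast
  obtain D2 where D2: "RegAt f ((f ^^ n) z) D2" using R by blast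
  have c2: "D2 = 0 \<longleftrightarrow> (f ^^ n) z \<in> crit_points f" using crit_iff[OF D2] by simp
  have "RegAt (f ^^ Suc n) z (D2 * D1)" using RegAt_comp[OF D1(1) D2] by simp
  moreover have "D2 * D1 = 0 \<longleftrightarrow> (\<exists>j<Suc n. (f ^^ j) z \<in> crit_points f)"
    using D1(2) c2 less_Suc_eq by auto
  ultimately show ?case by blast
qed

lemma crit_iter:
  assumes R: "\<And>z. \<exists>D. RegAt f z D"
  shows "z \<in> crit_points (f ^^ n) \<longleftrightarrow> (\<exists>j<n. (f ^^ j) z \<in> crit_points f)"
  using iter_reg[OF R, of n z] crit_iff by blast

lemma local_rat:
  fixes G :: "complex \<Rightarrow> sphere" and A B :: "complex \<Rightarrow> complex"
  assumes dA: "(A has_field_derivative A') (at w0)" and dB: "(B has_field_derivative B') (at w0)"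
    and nz: "\<not> (A w0 = 0 \<and> B w0 = 0)"
    and G: "\<And>w. G w = (if B w = 0 then None else Some (A w / B w))"
  shows "((\<lambda>w. chart (G w0) (G w)) has_field_derivative
           (if B w0 \<noteq> 0 then (A' * B w0 - A w0 * B') / (B w0 * B w0) else B' / A w0)) (at w0)"
    and "\<forall>\<^sub>F w in nhds w0. G w \<in> goodset (G w0)"
proof -
  have cA: "(A \<longlongrightarrow> A w0) (nhds w0)" using DERIV_isCont[OF dA]
    by (metis isCont_def tendsto_at_iff_tendsto_nhds)
  have cB: "(B \<longlongrightarrow> B w0) (nhds w0)" using DERIV_isCont[OF dB]
    by (metis isCont_def tendsto_at_iff_tendsto_nhds)
  have "((\<lambda>w. chart (G w0) (G w)) has_field_derivative
           (if B w0 \<noteq> 0 then (A' * B w0 - A w0 * B') / (B w0 * B w0) else B' / A w0)) (at w0)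
       \<and> (\<forall>\<^sub>F w in nhds w0. G w \<in> goodset (G w0))"
  proof (cases "B w0 = 0")
    case False
    have ev: "\<forall>\<^sub>F w in nhds w0. B w \<noteq> 0" using cB False
      by (simp add: tendsto_imp_eventually_ne)
    have G0: "G w0 = Some (A w0 / B w0)" using G False by simp
    have ev2: "\<forall>\<^sub>F w in nhds w0. chart (G w0) (G w) = A w / B w" using ev
      by (rule eventually_mono) (simp only: G0, simp add: G chart_def)
    have d: "((\<lambda>w. A w / B w) has_field_derivative (A' * B w0 - A w0 * B') / (B w0 * B w0)) (at w0)"
      by (rule DERIV_divide[OF dA dB False])
    have "((\<lambda>w. chart (G w0) (G w)) has_field_derivative (A' * B w0 - A w0 * B') / (B w0 * B w0)) (at w0)"
      using DERIV_cong_ev[OF refl ev2 refl] d by simp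
    moreover have "\<forall>\<^sub>F w in nhds w0. G w \<in> goodset (G w0)" using ev
      by (rule eventually_mono) (simp only: G0, simp add: G goodset_def chart_def chart_inv_def)
    ultimately show ?thesis using False by simp
  next
    case True
    then have A0: "A w0 \<noteq> 0" using nz by simp
    have ev: "\<forall>\<^sub>F w in nhds w0. A w \<noteq> 0" using cA A0
      by (simp add: tendsto_imp_eventually_ne)
    have G0: "G w0 = None" using G True by simp
    have ev2: "\<forall>\<^sub>F w in nhds w0. chart (G w0) (G w) = B w / A w" using ev
      by (rule eventually_mono) (simp only: G0, simp add: G chart_def)
    have d: "((\<lambda>w. B w / A w) has_field_derivative (B' * A w0 - B w0 * A') / (A w0 * A w0)) (at w0)"
      by (rule DERIV_divide[OF dB dA A0])
    have "(B' * A w0 - B w0 * A') / (A w0 * A w0) = B' / A w0" using True A0 by (simp add: field_simps)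
    then have "((\<lambda>w. chart (G w0) (G w)) has_field_derivative B' / A w0) (at w0)"
      using DERIV_cong_ev[OF refl ev2 refl] d by simp
    moreover have "\<forall>\<^sub>F w in nhds w0. G w \<in> goodset (G w0)" using ev
      by (rule eventually_mono) (simp only: G0, simp add: G goodset_def chart_def chart_inv_def)
    ultimately show ?thesis using True by simp
  qed
  then show "((\<lambda>w. chart (G w0) (G w)) has_field_derivative
           (if B w0 \<noteq> 0 then (A' * B w0 - A w0 * B') / (B w0 * B w0) else B' / A w0)) (at w0)"
    and "\<forall>\<^sub>F w in nhds w0. G w \<in> goodset (G w0)" by auto
qed



definition PR :: "complex \<Rightarrow> complex \<Rightarrow> complex \<Rightarrow> sphere \<Rightarrow> bool" where
  "PR r0 r1 r2 z = (case z of Some a \<Rightarrow> r0 + r1*a + r2*a^2 = 0 | None \<Rightarrow> r2 = 0)"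
definition CR :: "complex \<Rightarrow> complex \<Rightarrow> complex \<Rightarrow> sphere \<Rightarrow> bool" where
  "CR r0 r1 r2 z = (case z of Some a \<Rightarrow> r1 + 2*r2*a = 0 | None \<Rightarrow> r1 = 0)"

lemma quadA:
  assumes nz: "\<not> (r0 = 0 \<and> r1 = 0 \<and> r2 = 0)" and "PR r0 r1 r2 z" "CR r0 r1 r2 z" "PR r0 r1 r2 z'"
  shows "z' = z"
proof (cases z)
  case None
  then show ?thesis using assms by (cases z') (auto simp: PR_def CR_def)
next
  case (Some a)
  have h1: "r0 + r1*a + r2*a^2 = 0" and h2: "r1 + 2*r2*a = 0" using assms Some by (auto simp: PR_def CR_def)
  have r2: "r2 \<noteq> 0" using h1 h2 nz by auto
  show ?thesis
  proof (cases z')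
    case None then show ?thesis using assms r2 by (auto simp: PR_def)
  next
    case (Some b)
    then have h3: "r0 + r1*b + r2*b^2 = 0" using assms by (auto simp: PR_def)
    have "r2 * (b - a)^2 = 0" using h1 h2 h3 by algebra
    then have "b = a" using r2 by simp
    then show ?thesis using Some \<open>z = Some a\<close> by simp
  qed
qed

lemma quadB:
  assumes nz: "\<not> (r0 = 0 \<and> r1 = 0 \<and> r2 = 0)"
  shows "\<exists>u v. \<forall>z. PR r0 r1 r2 z \<longrightarrow> z = u \<or> z = v"
proof (cases "r2 = 0")
  case True
  show ?thesis
  proof (intro exI allI impI)
    fix z assume "PR r0 r1 r2 z"
    then show "z = None \<or> z = Some (- r0 / r1)"
    proof (cases z)
      case (Some a)
      then have e: "r0 + r1*a = 0" using \<open>PR r0 r1 r2 z\<close> True by (simp add: PR_def)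
      then have "r1 \<noteq> 0" using nz True by auto
      then have "a = - r0 / r1" using e by (simp add: field_simps add_eq_0_iff)
      then show ?thesis using Some by simp
    qed simp
  qed
next
  case False
  show ?thesis
  proof (cases "\<exists>a. r0 + r1*a + r2*a^2 = 0")
    case True
    then obtain a where h1: "r0 + r1*a + r2*a^2 = 0" by blast
    show ?thesis
    proof (intro exI allI impI)
      fix z assume "PR r0 r1 r2 z"
      then show "z = Some a \<or> z = Some (- r1 / r2 - a)"
      proof (cases z)
        case None then show ?thesis using \<open>PR r0 r1 r2 z\<close> False by (simp add: PR_def)
      next
        case (Some b)
        then have h3: "r0 + r1*b + r2*b^2 = 0" using \<open>PR r0 r1 r2 z\<close> by (auto simp: PR_def)
        have "(b - a) * (r1 + r2*(a+b)) = 0" using h1 h3 by algebra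
        then have "b - a = 0 \<or> r1 + r2*(a+b) = 0" by simp
        moreover have "r1 + r2*(a+b) = 0 \<Longrightarrow> b = - r1 / r2 - a" using False
          by (simp add: field_simps) (metis add.commute add_eq_0_iff distrib_left)
        ultimately have "b = a \<or> b = - r1 / r2 - a" by auto
        then show ?thesis using Some by auto
      qed
    qed
  next
    case nr: False
    show ?thesis
    proof (intro exI allI impI)
      fix z assume "PR r0 r1 r2 z"
      then show "z = None \<or> z = None" using nr False by (cases z) (auto simp: PR_def)
    qed
  qed
qed

lemma quadC:
  assumes nz: "\<not> (r0 = 0 \<and> r1 = 0 \<and> r2 = 0)" and nc: "\<forall>z. PR r0 r1 r2 z \<longrightarrow> \<not> CR r0 r1 r2 z"
  shows "\<exists>u v. u \<noteq> v \<and> PR r0 r1 r2 u \<and> PR r0 r1 r2 v"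
proof (cases "r2 = 0")
  case True
  then have "PR r0 r1 r2 None" by (simp add: PR_def)
  then have r1: "r1 \<noteq> 0" using nc by (auto simp: CR_def)
  have "PR r0 r1 r2 (Some (- r0 / r1))" using True r1 by (simp add: PR_def field_simps)
  then show ?thesis using \<open>PR r0 r1 r2 None\<close> by blast
next
  case False
  define s where "s = csqrt (r1^2 - 4*r2*r0)"
  have s2: "s^2 = r1^2 - 4*r2*r0" by (simp add: s_def)
  define a where "a = (- r1 + s) / (2*r2)"
  define b where "b = (- r1 - s) / (2*r2)"
  have a2: "2*r2*a = - r1 + s" using False by (simp add: a_def field_simps)
  have b2: "2*r2*b = - r1 - s" using False by (simp add: b_def field_simps)
  have "4*r2*(r0 + r1*a + r2*a^2) = 0" using a2 s2 by algebra
  then have ra: "r0 + r1*a + r2*a^2 = 0" using False by simp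
  have "4*r2*(r0 + r1*b + r2*b^2) = 0" using b2 s2 by algebra
  then have rb: "r0 + r1*b + r2*b^2 = 0" using False by simp
  have pa: "PR r0 r1 r2 (Some a)" and pb: "PR r0 r1 r2 (Some b)" using ra rb by (auto simp: PR_def)
  have "\<not> CR r0 r1 r2 (Some a)" using nc pa by blast
  then have "s \<noteq> 0" using a2 by (auto simp: CR_def)
  then have "a \<noteq> b" using a2 b2 by auto
  then show ?thesis using pa pb by blast
qed



locale qr =
  fixes f :: "sphere \<Rightarrow> sphere" and p0 p1 p2 q0 q1 q2 :: complex
  assumes F1: "\<And>a. f (Some a) = (if q0 + q1*a + q2*a^2 = 0 then None
                  else Some ((p0 + p1*a + p2*a^2) / (q0 + q1*a + q2*a^2)))"
    and F2: "f None = (if q2 = 0 then None else Some (p2 / q2))"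
    and N1: "\<And>a. \<not> (p0 + p1*a + p2*a^2 = 0 \<and> q0 + q1*a + q2*a^2 = 0)"
    and N2: "p2 \<noteq> 0 \<or> q2 \<noteq> 0"
    and N3: "\<And>c. \<not> (p0 = c*q0 \<and> p1 = c*q1 \<and> p2 = c*q2)"
    and N4: "\<not> (q0 = 0 \<and> q1 = 0 \<and> q2 = 0)"
begin

definition P where "P a = p0 + p1*a + p2*a^2"
definition Q where "Q a = q0 + q1*a + q2*a^2"

lemma dpoly: "((\<lambda>w. c0 + c1*w + c2*w^2) has_field_derivative (c1 + 2*c2*a)) (at a)"
  by (auto intro!: derivative_eq_intros)

definition DS where "DS a = (if Q a \<noteq> 0 then ((p1 + 2*p2*a) * Q a - P a * (q1 + 2*q2*a)) / (Q a * Q a)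
      else (q1 + 2*q2*a) / P a)"

lemma regSome: "RegAt f (Some a) (DS a)"
proof -
  have G: "\<And>w. f (Some w) = (if Q w = 0 then None else Some (P w / Q w))"
    using F1 by (simp add: P_def Q_def)
  have dP: "(P has_field_derivative (p1 + 2*p2*a)) (at a)" unfolding P_def[abs_def] by (rule dpoly)
  have dQ: "(Q has_field_derivative (q1 + 2*q2*a)) (at a)" unfolding Q_def[abs_def] by (rule dpoly)
  note L = local_rat[OF dP dQ _ G, unfolded P_def[symmetric] Q_def[symmetric]]
  have nz: "\<not> (P a = 0 \<and> Q a = 0)" using N1 by (simp add: P_def Q_def)
  have e: "loc f (Some a) = (\<lambda>w. chart (f (Some a)) (f (Some w)))"
    by (rule ext) (simp add: loc_def chart_inv_def)
  show ?thesis unfolding RegAt_def e using L[OF nz]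
    by (simp add: chart_def chart_inv_def DS_def)
qed

definition DN where "DN = (if q2 \<noteq> 0 then (p1 * q2 - p2 * q1) / (q2 * q2) else q1 / p2)"

lemma regNone: "RegAt f None DN"
proof -
  define A where "A w = p2 + p1*w + p0*w^2" for w
  define B where "B w = q2 + q1*w + q0*w^2" for w
  have G: "f (chart_inv None w) = (if B w = 0 then None else Some (A w / B w))" for w
  proof (cases "w = 0")
    case True then show ?thesis by (simp add: chart_inv_def F2 A_def B_def)
  next
    case False
    have qq: "q0 + q1 / w + q2 * (1 / w)^2 = B w / w^2" using False
      by (simp add: B_def field_simps power2_eq_square)
    have pp: "p0 + p1 / w + p2 * (1 / w)^2 = A w / w^2" using False
      by (simp add: A_def field_simps power2_eq_square)
    show ?thesis using False by (simp add: chart_inv_def F1 qq pp)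
  qed
  have dA: "(A has_field_derivative (p1 + 2*p0*0)) (at 0)" unfolding A_def[abs_def] by (rule dpoly)
  have dB: "(B has_field_derivative (q1 + 2*q0*0)) (at 0)" unfolding B_def[abs_def] by (rule dpoly)
  have nz: "\<not> (A 0 = 0 \<and> B 0 = 0)" using N2 by (simp add: A_def B_def)
  note L = local_rat[OF dA dB nz, of "\<lambda>w. f (chart_inv None w)", OF G]
  have e: "loc f None = (\<lambda>w. chart (f (chart_inv None 0)) (f (chart_inv None w)))"
    by (rule ext) (simp add: loc_def chart_inv_def)
  have A0: "A 0 = p2" and B0: "B 0 = q2" by (simp_all add: A_def B_def)
  have d: "(if B 0 \<noteq> 0 then ((p1 + 2*p0*0) * B 0 - A 0 * (q1 + 2*q0*0)) / (B 0 * B 0)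
      else (q1 + 2*q0*0) / A 0) = DN" by (simp add: A0 B0 DN_def)
  have c0: "chart None None = 0" by (simp add: chart_def)
  show ?thesis unfolding RegAt_def e c0 using L(1)[unfolded d] L(2)
    by (simp add: chart_inv_def)
qed

lemma reg_all: "\<exists>D. RegAt f z D"
  using regSome regNone by (cases z) auto

definition rr0 where "rr0 y = (case y of Some c \<Rightarrow> p0 - c*q0 | None \<Rightarrow> q0)"
definition rr1 where "rr1 y = (case y of Some c \<Rightarrow> p1 - c*q1 | None \<Rightarrow> q1)"
definition rr2 where "rr2 y = (case y of Some c \<Rightarrow> p2 - c*q2 | None \<Rightarrow> q2)"

lemma rr_nz: "\<not> (rr0 y = 0 \<and> rr1 y = 0 \<and> rr2 y = 0)"
  using N3 N4 by (cases y) (auto simp: rr0_def rr1_def rr2_def)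

lemma pre_iff: "f z = y \<longleftrightarrow> PR (rr0 y) (rr1 y) (rr2 y) z"
proof (cases z)
  case None
  then show ?thesis using N2 by (cases y) (auto simp: F2 PR_def rr0_def rr1_def rr2_def field_simps)
next
  case (Some a)
  have np: "Q a = 0 \<Longrightarrow> P a \<noteq> 0" using N1 by (auto simp: P_def Q_def)
  have fa: "f (Some a) = (if Q a = 0 then None else Some (P a / Q a))" using F1 by (simp add: P_def Q_def)
  show ?thesis
  proof (cases y)
    case None then show ?thesis using Some by (simp add: fa PR_def rr0_def rr1_def rr2_def Q_def)
  next
    case (Some c)
    have e: "(p0 - c*q0) + (p1 - c*q1)*a + (p2 - c*q2)*a^2 = P a - c * Q a"
      by (simp add: P_def Q_def algebra_simps)
    have "f (Some a) = Some c \<longleftrightarrow> P a - c * Q a = 0"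
      using np by (auto simp: fa field_simps)
    then show ?thesis using \<open>z = Some a\<close> Some by (simp add: PR_def rr0_def rr1_def rr2_def e)
  qed
qed

lemma crit_char: "z \<in> crit_points f \<longleftrightarrow> CR (rr0 (f z)) (rr1 (f z)) (rr2 (f z)) z"
proof (cases z)
  case None
  have c0: "None \<in> crit_points f \<longleftrightarrow> DN = 0" by (rule crit_iff[OF regNone])
  have c: "None \<in> crit_points f \<longleftrightarrow> (if q2 \<noteq> 0 then (p1 * q2 - p2 * q1) / (q2 * q2) else q1 / p2) = 0"
    using c0 by (simp only: DN_def)
  show ?thesis
  proof (cases "q2 = 0")
    case True
    then have "p2 \<noteq> 0" using N2 by simp
    then show ?thesis using None c True by (simp add: DN_def F2 CR_def rr1_def)
  next
    case False
    have "(if q2 \<noteq> 0 then (p1 * q2 - p2 * q1) / (q2 * q2) else q1 / p2) = 0 \<longleftrightarrow> p1 - p2 / q2 * q1 = 0" using False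
      by (simp add: field_simps)
    then show ?thesis using None c False by (simp add: F2 CR_def rr1_def)
  qed
next
  case (Some a)
  have c: "Some a \<in> crit_points f \<longleftrightarrow> DS a = 0" by (rule crit_iff[OF regSome])
  have fa: "f (Some a) = (if Q a = 0 then None else Some (P a / Q a))" using F1 by (simp add: P_def Q_def)
  show ?thesis
  proof (cases "Q a = 0")
    case True
    then have "P a \<noteq> 0" using N1 by (auto simp: P_def Q_def)
    then show ?thesis using Some c True by (simp add: DS_def fa CR_def rr1_def rr2_def)
  next
    case False
    define P' where "P' = p1 + 2*p2*a"
    define Q' where "Q' = q1 + 2*q2*a"
    have h1: "DS a = 0 \<longleftrightarrow> P' * Q a - P a * Q' = 0" using False by (simp add: DS_def P'_def Q'_def)
    have h2: "P' * Q a - P a * Q' = Q a * (P' - P a / Q a * Q')" using False by (simp add: field_simps)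
    have h3: "(p1 - P a / Q a * q1) + 2 * (p2 - P a / Q a * q2) * a = P' - P a / Q a * Q'"
      by (simp add: P'_def Q'_def algebra_simps add_divide_distrib)
    have "DS a = 0 \<longleftrightarrow> (p1 - P a / Q a * q1) + 2 * (p2 - P a / Q a * q2) * a = 0"
      using h1 h2 h3 False by simp
    then show ?thesis using Some c False by (simp add: fa CR_def rr1_def rr2_def)
  qed
qed

end


context qr begin

lemma dynA: "z \<in> crit_points f \<Longrightarrow> f z' = f z \<Longrightarrow> z' = z"
  using quadA[OF rr_nz, of "f z" z z'] pre_iff[of z "f z"] pre_iff[of z' "f z"] crit_char[of z]
  by auto

lemma dynB: "\<exists>u v. \<forall>z. f z = y \<longrightarrow> z = u \<or> z = v"
  using quadB[OF rr_nz, of y] by (simp add: pre_iff[symmetric])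

lemma dynC: assumes "\<forall>z. f z = y \<longrightarrow> z \<notin> crit_points f"
  shows "\<exists>u v. u \<noteq> v \<and> f u = y \<and> f v = y"
proof -
  have "\<forall>z. PR (rr0 y) (rr1 y) (rr2 y) z \<longrightarrow> \<not> CR (rr0 y) (rr1 y) (rr2 y) z"
  proof (intro allI impI)
    fix z assume "PR (rr0 y) (rr1 y) (rr2 y) z"
    then have "f z = y" by (simp add: pre_iff)
    then show "\<not> CR (rr0 y) (rr1 y) (rr2 y) z" using assms crit_char[of z] by auto
  qed
  from quadC[OF rr_nz this] show ?thesis by (simp add: pre_iff[symmetric])
qed

lemma main_qr:
  assumes cv: "crit_values f = {v1, v2}" and ne: "v1 \<noteq> v2" and co: "f v1 = f v2" and k: "k \<ge> 2"
  shows "x \<in> crit_values f \<union> {f v1} \<longleftrightarrow> (f ^^ k) -` {x} \<subseteq> crit_points (f ^^ k)"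
proof -
  note ci = crit_iter[OF reg_all]
  have "v1 \<in> f ` crit_points f" "v2 \<in> f ` crit_points f" using cv unfolding crit_values_def by auto
  then obtain c1 c2 where c: "c1 \<in> crit_points f" "c2 \<in> crit_points f" "v1 = f c1" "v2 = f c2"
    by blast
  obtain m where km: "k = Suc (Suc m)" using k
    proof - have "\<exists>m. k = Suc (Suc m)" using k by presburger then show ?thesis using that by blast qed
  have fk: "(f ^^ k) y = f ((f ^^ (k - 1)) y)" for y
    using km by simp
  have fk1: "(f ^^ (k - 1)) y = f ((f ^^ (k - 2)) y)" for y
    using km by simp
  define S where "S = {v1, v2, f v1}"
  have S: "crit_values f \<union> {f v1} = S" using cv S_def by auto
  have fwd: "(f ^^ k) -` {x} \<subseteq> crit_points (f ^^ k)" if "x \<in> S" for x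
  proof
    fix y assume "y \<in> (f ^^ k) -` {x}"
    then have y: "(f ^^ k) y = x" by simp
    consider "x = v1" | "x = v2" | "x = f v1" using \<open>x \<in> S\<close> S_def by auto
    then show "y \<in> crit_points (f ^^ k)"
    proof cases
      case 1
      then have "(f ^^ (k - 1)) y = c1" using dynA[OF c(1)] y fk c(3) by simp
      moreover have "k - 1 < k" using km by simp
      ultimately show ?thesis using ci c(1) by blast
    next
      case 2
      then have "(f ^^ (k - 1)) y = c2" using dynA[OF c(2)] y fk c(4) by simp
      moreover have "k - 1 < k" using km by simp
      ultimately show ?thesis using ci c(2) by blast
    next
      case 3
      obtain u v where uv: "\<forall>z. f z = f v1 \<longrightarrow> z = u \<or> z = v" using dynB by blast
      have a1: "(f ^^ (k - 1)) y = u \<or> (f ^^ (k - 1)) y = v" using uv y fk 3 by simp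
      have a2: "v1 = u \<or> v1 = v" "v2 = u \<or> v2 = v" using uv co by auto
      have "(f ^^ (k - 1)) y = v1 \<or> (f ^^ (k - 1)) y = v2"
        using a1 a2 ne by auto
      then have "f ((f ^^ (k - 2)) y) = f c1 \<or> f ((f ^^ (k - 2)) y) = f c2"
        using c fk1 by simp
      then have "(f ^^ (k - 2)) y = c1 \<or> (f ^^ (k - 2)) y = c2"
        using dynA c(1,2) by blast
      moreover have "k - 2 < k" using k by simp
      ultimately show ?thesis using ci c by blast
    qed
  qed
  have step: "\<exists>x'. x' \<notin> S \<and> f x' = x \<and> x' \<notin> crit_points f" if "x \<notin> S" for x
  proof -
    have nc: "\<forall>z. f z = x \<longrightarrow> z \<notin> crit_points f"
    proof (intro allI impI notI)
      fix z assume "f z = x" "z \<in> crit_points f"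
      then have "x \<in> crit_values f" unfolding crit_values_def by blast
      then show False using that cv S_def by auto
    qed
    obtain u v where uv: "u \<noteq> v" "f u = x" "f v = x" using dynC[OF nc] by blast
    have "u \<notin> S \<or> v \<notin> S" using uv that co S_def by auto
    then show ?thesis using uv nc by blast
  qed
  have chain: "\<forall>x. x \<notin> S \<longrightarrow> (\<exists>y. y \<notin> S \<and> (f ^^ n) y = x \<and> (\<forall>j<n. (f ^^ j) y \<notin> crit_points f))" for n
  proof (induction n)
    case 0 then show ?case by auto
  next
    case (Suc n)
    show ?case
    proof (intro allI impI)
      fix x assume "x \<notin> S"
      obtain x' where x': "x' \<notin> S" "f x' = x" "x' \<notin> crit_points f" using step[OF \<open>x \<notin> S\<close>] by blast
      obtain y where y: "y \<notin> S" "(f ^^ n) y = x'" "\<forall>j<n. (f ^^ j) y \<notin> crit_points f"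
        using Suc x'(1) by blast
      have "(f ^^ Suc n) y = x" using y(2) x'(2) by simp
      moreover have "\<forall>j<Suc n. (f ^^ j) y \<notin> crit_points f" using y(2,3) x'(3) less_Suc_eq by auto
      ultimately show "\<exists>y. y \<notin> S \<and> (f ^^ Suc n) y = x \<and> (\<forall>j<Suc n. (f ^^ j) y \<notin> crit_points f)"
        using y(1) by blast
    qed
  qed
  have bwd: "\<not> (f ^^ k) -` {x} \<subseteq> crit_points (f ^^ k)" if ns: "x \<notin> S" for x
  proof -
    obtain y where "(f ^^ k) y = x" "\<forall>j<k. (f ^^ j) y \<notin> crit_points f" using chain ns by blast
    then show ?thesis using ci by blast
  qed
  show ?thesis using fwd bwd S by blast
qed

end



lemma poly_quad: "degree (p::complex poly) \<le> 2 \<Longrightarrow> poly p a = coeff p 0 + coeff p 1 * a + coeff p 2 * a^2"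
proof -
  assume d: "degree p \<le> 2"
  have "p = [:coeff p 0, coeff p 1, coeff p 2:]"
  proof (rule poly_eqI)
    fix n show "coeff p n = coeff [:coeff p 0, coeff p 1, coeff p 2:] n"
    proof (cases "n \<le> 2")
      case True then have "n = 0 \<or> n = 1 \<or> n = 2" by auto
      then show ?thesis by (auto simp: numeral_2_eq_2)
    next
      case False
      then have "coeff p n = 0" using d by (intro coeff_eq_0) auto
      moreover have "\<exists>m. n = Suc (Suc (Suc m))" using False by presburger
      then obtain m where "n = Suc (Suc (Suc m))" by blast
      ultimately show ?thesis by simp
    qed
  qed
  then have "poly p a = poly [:coeff p 0, coeff p 1, coeff p 2:] a" by simp
  then show ?thesis by (simp add: algebra_simps power2_eq_square)
qed

lemma qrm_qr:
  assumes "quadratic_rational_map f"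
  shows "\<exists>p0 p1 p2 q0 q1 q2. qr f p0 p1 p2 q0 q1 q2"
proof -
  obtain p q where pq: "q \<noteq> 0" "coprime p q" "max (degree p) (degree q) = 2" "f = rat_map p q"
    using assms unfolding quadratic_rational_map_def by blast
  have dp: "degree p \<le> 2" and dq: "degree q \<le> 2" using pq(3) by auto
  note pp = poly_quad[OF dp] and qq = poly_quad[OF dq]
  have N1: "\<not> (poly p a = 0 \<and> poly q a = 0)" for a
  proof
    assume "poly p a = 0 \<and> poly q a = 0"
    then have "[:-a, 1:] dvd p" "[:-a, 1:] dvd q" by (auto simp: poly_eq_0_iff_dvd)
    then have "is_unit [:-a, 1:]" by (rule coprime_common_divisor[OF pq(2)])
    then show False using is_unit_iff_degree[of "[:-a, 1:]"] by simp
  qed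
  have N2: "coeff p 2 \<noteq> 0 \<or> coeff q 2 \<noteq> 0"
  proof -
    have "degree p = 2 \<or> degree q = 2" using pq(3) by (auto simp: max_def split: if_splits)
    moreover have "coeff p 2 \<noteq> 0" if "degree p = 2" using that leading_coeff_neq_0[of p] by (cases "p = 0") auto
    moreover have "coeff q 2 \<noteq> 0" if "degree q = 2" using that leading_coeff_neq_0[of q] by (cases "q = 0") auto
    ultimately show ?thesis by blast
  qed
  have N3: "\<not> (coeff p 0 = c * coeff q 0 \<and> coeff p 1 = c * coeff q 1 \<and> coeff p 2 = c * coeff q 2)" for c
  proof
    assume h: "coeff p 0 = c * coeff q 0 \<and> coeff p 1 = c * coeff q 1 \<and> coeff p 2 = c * coeff q 2"
    have "p = smult c q"
    proof (rule poly_eqI)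
      fix n show "coeff p n = coeff (smult c q) n"
      proof (cases "n \<le> 2")
        case True then have "n = 0 \<or> n = 1 \<or> n = 2" by auto
        then show ?thesis using h by auto
      next
        case False then show ?thesis using dp dq by (simp add: coeff_eq_0)
      qed
    qed
    then have "q dvd p" using dvd_smult[OF dvd_refl[of q], of c] by simp
    then have "is_unit q" by (rule coprime_common_divisor[OF pq(2) _ dvd_refl])
    then have "degree q = 0" using is_unit_iff_degree[OF pq(1)] by simp
    moreover have "degree p \<le> degree q" using \<open>p = smult c q\<close> by (simp add: degree_smult_le)
    ultimately show False using pq(3) by simp
  qed
  have N4: "\<not> (coeff q 0 = 0 \<and> coeff q 1 = 0 \<and> coeff q 2 = 0)"
  proof
    assume h: "coeff q 0 = 0 \<and> coeff q 1 = 0 \<and> coeff q 2 = 0"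
    have "q = 0"
    proof (rule poly_eqI)
      fix n show "coeff q n = coeff 0 n"
      proof (cases "n \<le> 2")
        case True then have "n = 0 \<or> n = 1 \<or> n = 2" by auto
        then show ?thesis using h by auto
      next
        case False then show ?thesis using dq by (simp add: coeff_eq_0)
      qed
    qed
    then show False using pq(1) by simp
  qed
  have F2: "f None = (if coeff q 2 = 0 then None else Some (coeff p 2 / coeff q 2))"
  proof (cases "coeff q 2 = 0")
    case True
    have "degree q \<noteq> 2"
    proof
      assume d: "degree q = 2"
      have "coeff q (degree q) \<noteq> 0" by (rule leading_coeff_neq_0[OF pq(1)])
      then show False using True d by simp
    qed
    then have "degree q < degree p" using pq(3) dq by (auto simp: max_def split: if_splits)
    then show ?thesis using True pq(4) by (simp add: rat_map_def)
  next
    case False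
    then have "degree q = 2" using dq le_degree[of q 2] by simp
    then show ?thesis using False pq(4) dp by (simp add: rat_map_def)
  qed
  have F1: "f (Some a) = (if coeff q 0 + coeff q 1 * a + coeff q 2 * a\<^sup>2 = 0 then None
         else Some ((coeff p 0 + coeff p 1 * a + coeff p 2 * a\<^sup>2) / (coeff q 0 + coeff q 1 * a + coeff q 2 * a\<^sup>2)))" for a
      using pq(4) by (simp only: rat_map_def pp qq option.case)
  have N1': "\<not> (coeff p 0 + coeff p 1 * a + coeff p 2 * a\<^sup>2 = 0 \<and> coeff q 0 + coeff q 1 * a + coeff q 2 * a\<^sup>2 = 0)" for a
    using N1[of a] unfolding pp qq .
  have "qr f (coeff p 0) (coeff p 1) (coeff p 2) (coeff q 0) (coeff q 1) (coeff q 2)"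
    apply (rule qr.intro)
    apply (rule F1)
    apply (rule F2)
    using N1' apply blast
    using N2 apply blast
    using N3 apply blast
    using N4 apply blast
    done
  then show ?thesis by blast
qed

theorem mainTheorem9:
  fixes f :: "sphere \<Rightarrow> sphere" and v1 v2 :: sphere and k :: nat
  assumes "quadratic_rational_map f"
    and "crit_values f = {v1, v2}" and "v1 \<noteq> v2"
    and "f v1 = f v2"
    and "k \<ge> 2"
  shows "\<forall>x. x \<in> crit_values f \<union> {f v1} \<longleftrightarrow> (f ^^ k) -` {x} \<subseteq> crit_points (f ^^ k)"
proof
  fix x
  obtain p0 p1 p2 q0 q1 q2 where "qr f p0 p1 p2 q0 q1 q2" using qrm_qr[OF assms(1)] by blast
  then show "x \<in> crit_values f \<union> {f v1} \<longleftrightarrow> (f ^^ k) -` {x} \<subseteq> crit_points (f ^^ k)"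
    using qr.main_qr assms(2-5) by blast
qed

end
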